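(* Let $G=(V,E)$ be a directed unweighted graph with finite diameter $D=3h+z$, where $h\ge 0$ and $z\in\{0,1,2\}$, and let $s\in[1,n]$. Let $w\in V$ satisfy $d_s^{\mathrm{out}}(w)=\max_{v\in V}d_s^{\mathrm{out}}(v)$ and let $S\subseteq V$ be any set with $S\cap N_s^{\mathrm{out}}(v)\neq\emptyset$ for every $v\in V$. Let $\hat D$ be the maximum of $d^{\mathrm{out}}(w)$, $\max_{u\in N_s^{\mathrm{out}}(w)}d^{\mathrm{in}}(u)$ and $\max_{u\in S}d^{\mathrm{out}}(u)$. Then $\hat D\le D$; moreover $\hat D\ge 2h+z$ if $z\in\{0,1\}$ and $\hat D\ge 2h+1$ if $z=2$.
   Context: $d(u,v)$ is the shortest-path distance from $u$ to $v$; $d^{\mathrm{out}}(v)=\max_u d(v,u)$, $d^{\mathrm{in}}(v)=\max_u d(u,v)$. $N_s^{\mathrm{out}}(v)$ is the set of the $s$ vertices $u$ with smallest $d(v,u)$, ties broken by smaller vertex id; $d_s^{\mathrm{out}}(v)=\max_{u\in N_s^{\mathrm{out}}(v)} d(v,u)$. *)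

theory Defs
  imports Main
begin

text \<open>Directed unweighted graph on vertex set V = {..<n} (vertex ids are the naturals
  below n, used for tie-breaking), edge set E.  The distance is the least number of
  edges of a walk (relpow of E).\<close>

definition dist :: "(nat \<times> nat) set \<Rightarrow> nat \<Rightarrow> nat \<Rightarrow> nat" where
  "dist E u v = (LEAST k. (u, v) \<in> E ^^ k)"

definition dout :: "nat \<Rightarrow> (nat \<times> nat) set \<Rightarrow> nat \<Rightarrow> nat" where
  "dout n E v = Max ((\<lambda>u. dist E v u) ` {..<n})"

definition din :: "nat \<Rightarrow> (nat \<times> nat) set \<Rightarrow> nat \<Rightarrow> nat" where
  "din n E v = Max ((\<lambda>u. dist E u v) ` {..<n})"

definition diameter :: "nat \<Rightarrow> (nat \<times> nat) set \<Rightarrow> nat" where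
  "diameter n E = Max ((\<lambda>(u, v). dist E u v) ` ({..<n} \<times> {..<n}))"

text \<open>The s vertices u with smallest (d(v,u), u) in lexicographic order.\<close>
definition Nout :: "nat \<Rightarrow> (nat \<times> nat) set \<Rightarrow> nat \<Rightarrow> nat \<Rightarrow> nat set" where
  "Nout n E s v = {u \<in> {..<n}. card {x \<in> {..<n}.
       dist E v x < dist E v u \<or> (dist E v x = dist E v u \<and> x < u)} < s}"

definition dsout :: "nat \<Rightarrow> (nat \<times> nat) set \<Rightarrow> nat \<Rightarrow> nat \<Rightarrow> nat" where
  "dsout n E s v = Max ((\<lambda>u. dist E v u) ` Nout n E s v)"

end

theory Submission
  imports Defs
begin

lemma relpow_in:
  assumes "E \<subseteq> {..<n} \<times> {..<n}" "x < n" "(x, y) \<in> E ^^ k"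
  shows "y < n"
  using assms(3)
proof (induction k arbitrary: y)
  case 0 then show ?case using assms(2) by simp
next
  case (Suc k)
  then obtain z where "(x,z) \<in> E ^^ k" "(z,y) \<in> E" by auto
  then show ?case using assms(1) by auto
qed

lemma dist_path: "\<exists>k. (u,v) \<in> E ^^ k \<Longrightarrow> (u, v) \<in> E ^^ dist E u v"
  unfolding dist_def by (rule LeastI_ex)

lemma dist_le: "(u,v) \<in> E ^^ k \<Longrightarrow> dist E u v \<le> k"
  unfolding dist_def by (rule Least_le)

lemma dist_self: "dist E u u = 0"
  using dist_le[where u=u and v=u and E=E and k=0] by simp

lemma dist_zero: "dist E u v = 0 \<Longrightarrow> \<exists>k. (u,v) \<in> E ^^ k \<Longrightarrow> v = u"
  using dist_path[of u v E] by simp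

lemma dist_tri:
  assumes "\<exists>k. (u,v) \<in> E ^^ k" "\<exists>k. (v,x) \<in> E ^^ k"
  shows "dist E u x \<le> dist E u v + dist E v x"
proof -
  have "(u,x) \<in> E ^^ (dist E u v + dist E v x)"
    using dist_path[OF assms(1)] dist_path[OF assms(2)] relpow_add[of "dist E u v" "dist E v x" E]
    by auto
  then show ?thesis by (rule dist_le)
qed

theorem lemma4:
  fixes n s w h z :: nat and E :: "(nat \<times> nat) set" and S :: "nat set"
  assumes edges: "E \<subseteq> {..<n} \<times> {..<n}"
    and strongly_connected: "\<forall>u\<in>{..<n}. \<forall>v\<in>{..<n}. \<exists>k. (u, v) \<in> E ^^ k"
    and diam: "diameter n E = 3 * h + z"
    and z: "z \<in> {0, 1, 2}"
    and s: "1 \<le> s" "s \<le> n"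
    and w: "w \<in> {..<n}" "dsout n E s w = Max ((\<lambda>v. dsout n E s v) ` {..<n})"
    and S: "S \<subseteq> {..<n}" "\<forall>v\<in>{..<n}. S \<inter> Nout n E s v \<noteq> {}"
  shows "let Dhat = max (dout n E w) (max (Max ((\<lambda>u. din n E u) ` Nout n E s w))
                                         (Max ((\<lambda>u. dout n E u) ` S)))
         in Dhat \<le> diameter n E
            \<and> (z \<in> {0, 1} \<longrightarrow> Dhat \<ge> 2 * h + z)
            \<and> (z = 2 \<longrightarrow> Dhat \<ge> 2 * h + 1)"
proof -
  define D where "D = diameter n E"
  have n0: "0 < n" using s by simp
  have wn: "w < n" using w(1) by simp
  have fin: "finite (Nout n E s v)" for v unfolding Nout_def by simp
  have Nsub: "Nout n E s v \<subseteq> {..<n}" for v unfolding Nout_def by auto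
  have finS: "finite S" using S(1) finite_subset by blast
  have dD: "dist E u v \<le> D" if "u < n" "v < n" for u v
    unfolding D_def diameter_def by (rule Max_ge) (use that in auto)
  obtain a b where ab: "a < n" "b < n" "dist E a b = D"
  proof -
    have "D \<in> (\<lambda>(u, v). dist E u v) ` ({..<n} \<times> {..<n})"
      unfolding D_def diameter_def by (rule Max_in) (use n0 in auto)
    then show ?thesis using that by auto
  qed
  have doutD: "dout n E u \<le> D" if "u < n" for u
    unfolding dout_def using dD that n0 by (subst Max_le_iff) auto
  have dinD: "din n E u \<le> D" if "u < n" for u
    unfolding din_def using dD that n0 by (subst Max_le_iff) auto
  have doutge: "dist E u v \<le> dout n E u" if "v < n" for u v
    unfolding dout_def by (rule Max_ge) (use that in auto)
  have dinge: "dist E v u \<le> din n E u" if "v < n" for u v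
    unfolding din_def by (rule Max_ge) (use that in auto)
  have reach: "\<exists>k. (u,v) \<in> E ^^ k" if "u < n" "v < n" for u v
    using strongly_connected that by auto
  have selfN: "v \<in> Nout n E s v" if "v < n" for v
  proof -
    have e: "{x \<in> {..<n}. dist E v x < dist E v v \<or> (dist E v x = dist E v v \<and> x < v)} = {}"
    proof (rule ccontr)
      assume "\<not> ?thesis"
      then obtain x where x: "x < n" "dist E v x = 0" "x < v" by (auto simp: dist_self)
      then have "x = v" using dist_zero[of E v x] reach[OF that x(1)] by simp
      with x show False by simp
    qed
    then have c: "card {x \<in> {..<n}. dist E v x < dist E v v \<or> (dist E v x = dist E v v \<and> x < v)} = 0"
      by (simp only: card.empty)
    then show ?thesis unfolding Nout_def
      apply (rule_tac CollectI, rule_tac conjI)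
      using that apply simp
      using c s by linarith
  qed
  have Nne: "Nout n E s v \<noteq> {}" if "v < n" for v using selfN that by blast
  have dsge: "dist E v u \<le> dsout n E s v" if "u \<in> Nout n E s v" for u v
    unfolding dsout_def by (rule Max_ge) (use that fin in auto)
  have dsw: "dsout n E s v \<le> dsout n E s w" if "v < n" for v
    unfolding w(2) by (rule Max_ge) (use that in auto)
  have inN: "u \<in> Nout n E s w" if "u < n" "dist E w u < dsout n E s w" for u
  proof -
    have "dsout n E s w \<in> (\<lambda>u. dist E w u) ` Nout n E s w"
      unfolding dsout_def by (rule Max_in) (use fin Nne wn in auto)
    then obtain u0 where u0: "u0 \<in> Nout n E s w" "dist E w u0 = dsout n E s w" by auto
    have "{x \<in> {..<n}. dist E w x < dist E w u \<or> (dist E w x = dist E w u \<and> x < u)}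
        \<subseteq> {x \<in> {..<n}. dist E w x < dist E w u0 \<or> (dist E w x = dist E w u0 \<and> x < u0)}"
      using that(2) u0(2) by auto
    then have "card {x \<in> {..<n}. dist E w x < dist E w u \<or> (dist E w x = dist E w u \<and> x < u)}
        \<le> card {x \<in> {..<n}. dist E w x < dist E w u0 \<or> (dist E w x = dist E w u0 \<and> x < u0)}"
      by (rule card_mono[rotated]) simp
    then show ?thesis using u0(1) that(1) unfolding Nout_def by auto
  qed
  define A where "A = Max ((\<lambda>u. din n E u) ` Nout n E s w)"
  define B where "B = Max ((\<lambda>u. dout n E u) ` S)"
  have Sne: "S \<noteq> {}" using S(2) n0 by auto
  have AD: "A \<le> D" unfolding A_def using fin Nne[OF wn] Nsub dinD
    by (subst Max_le_iff) auto
  have BD: "B \<le> D" unfolding B_def using finS Sne S(1) doutD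
    by (subst Max_le_iff) auto
  have Age: "din n E u \<le> A" if "u \<in> Nout n E s w" for u
    unfolding A_def by (rule Max_ge) (use that fin in auto)
  have Bge: "dout n E u \<le> B" if "u \<in> S" for u
    unfolding B_def by (rule Max_ge) (use that finS in auto)
  have low: "(z \<in> {0, 1} \<longrightarrow> max (dout n E w) (max A B) \<ge> 2 * h + z)
            \<and> (z = 2 \<longrightarrow> max (dout n E w) (max A B) \<ge> 2 * h + 1)"
  proof (cases "dsout n E s w \<le> h")
    case True
    obtain u where u: "u \<in> S" "u \<in> Nout n E s a" using S(2) ab(1) by auto
    have un: "u < n" using u S(1) by auto
    have "dist E a u \<le> h" using dsge[OF u(2)] dsw[OF ab(1)] True by simp
    moreover have "D \<le> dist E a u + dist E u b"
      using dist_tri[OF reach[OF ab(1) un] reach[OF un ab(2)]] ab(3) by simp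
    moreover have "dist E u b \<le> B" using doutge[OF ab(2), of u] Bge[OF u(1)] by simp
    ultimately show ?thesis using diam z unfolding D_def by auto
  next
    case False
    define m where "m = dist E w b"
    show ?thesis
    proof (cases "m \<ge> 2 * h + z")
      case True
      then have "m \<le> dout n E w" unfolding m_def using doutge[OF ab(2)] by simp
      with True z show ?thesis by auto
    next
      case False2: False
      define j where "j = min h m"
      have "(w, b) \<in> E ^^ (j + (m - j))"
        using dist_path[OF reach[OF _ ab(2)]] w(1) unfolding m_def j_def by auto
      then obtain u where u1: "(w,u) \<in> E ^^ j" and u2: "(u,b) \<in> E ^^ (m - j)"
        unfolding relpow_add by auto
      have un: "u < n" using relpow_in[OF edges _ u1] w(1) by simp
      have "dist E w u \<le> j" using dist_le[OF u1] .
      then have uN: "u \<in> Nout n E s w" using inN[OF un] False unfolding j_def by simp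
      have "D \<le> dist E a u + dist E u b"
        using dist_tri[OF reach[OF ab(1) un] reach[OF un ab(2)]] ab(3) by simp
      moreover have "dist E u b \<le> m - j" using dist_le[OF u2] .
      moreover have "dist E a u \<le> A" using dinge[OF ab(1), of u] Age[OF uN] by simp
      ultimately show ?thesis using diam z False2 unfolding D_def j_def by auto
    qed
  qed
  have up: "max (dout n E w) (max A B) \<le> D" using doutD[OF wn] AD BD by simp
  show ?thesis using low up unfolding Let_def A_def B_def D_def by simp
qed

end
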